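(* For all $n\geq1$ and $i,j\in I$ one has $C^{(n)}_{-i,-j}=(-1)^{n-1}C^{(n)}_{ij}$. Moreover, for every $n\geq 1$ the element $c_n=\sum_{i\in I}C^{(n)}_{ii}$ is even and lies in the center of $U(\mathfrak{q}(N))$ (it commutes with every element of $U(\mathfrak{q}(N))$), and $c_n=0$ whenever $n$ is even.
   Context: Let $N\geq1$ and let $I=\{-N,\dots,-1,1,\dots,N\}$; all indices below range over $I$ unless stated otherwise. For $k\in I$ put $\bar k=0$ if $k>0$ and $\bar k=1$ if $k<0$. The Lie superalgebra $\mathfrak{q}(N)$ over $\mathbb{C}$ is the subalgebra of $\mathfrak{gl}(N|N)$ (with standard basis $E_{ij}$, $i,j\in I$, $E_{ij}$ of parity $\bar\imath+\bar\jmath$) spanned by $F_{ij}=E_{ij}+E_{-i,-j}$; thus $F_{-i,-j}=F_{ij}$, the $2N^2$ elements $F_{ij}$ with $i>0$ form a basis, $F_{ij}$ has parity $\bar\imath+\bar\jmath \bmod 2$, and $$[F_{ij}, F_{kl}] = \delta_{kj} F_{il} - (-1)^{(\bar{\imath}+ \bar{\jmath})(\bar{k} + \bar{l})} \delta_{il} F_{kj} + \delta_{k,-j} F_{-i,l} - (-1)^{(\bar{\imath} + \bar{\jmath})(\bar{k} + \bar{l})} \delta_{-i,l} F_{k,-j}.$$ For $n\geq1$ define elements of $U(\mathfrak{q}(N))$ by $$C^{(n)}_{ij} = \sum_{k_1,\ldots,k_{n-1}\in I}F_{ik_1} (-1)^{\bar{k}_1} F_{k_1k_2} (-1)^{\bar{k}_2}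 \cdots F_{k_{n-2}k_{n-1}} (-1)^{\bar{k}_{n-1}} F_{k_{n-1}j}$$ (so $C^{(1)}_{ij}=F_{ij}$), and $c_n=\sum_{i\in I}C^{(n)}_{ii}$. *)

theory Defs
  imports Complex_Main "HOL-Library.Function_Algebras"
begin

text \<open>Concrete model of U(q(N)): the free associative algebra over the complex numbers
on the basis symbols (i,j) (i > 0, j in I) of q(N), realised as finitely supported
functions from words to complex numbers, modulo the two-sided ideal generated by the
relations x y - (-1)^(|x||y|) y x - [x,y] for basis elements x, y.
Addition/subtraction are pointwise; the algebra product is fmul (NOT pointwise times).\<close>

type_synonym gen = "int \<times> int"
type_synonym fa = "gen list \<Rightarrow> complex"

definition idx :: "nat \<Rightarrow> int set" where
  "idx N = {k. k \<noteq> 0 \<and> \<bar>k\<bar> \<le> int N}"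

definition par :: "int \<Rightarrow> nat" where
  "par k = (if k < 0 then 1 else 0)"

definition basis :: "nat \<Rightarrow> gen set" where
  "basis N = {(i, j). 0 < i \<and> i \<le> int N \<and> j \<in> idx N}"

definition canon :: "int \<Rightarrow> int \<Rightarrow> gen" where
  "canon i j = (if 0 < i then (i, j) else (- i, - j))"

definition mono :: "gen list \<Rightarrow> fa" where
  "mono u = (\<lambda>w. if w = u then 1 else 0)"

text \<open>The element F_ij (note F_{-i,-j} = F_ij by construction).\<close>
definition F :: "int \<Rightarrow> int \<Rightarrow> fa" where
  "F i j = mono [canon i j]"

definition smul :: "complex \<Rightarrow> fa \<Rightarrow> fa" where
  "smul c p = (\<lambda>w. c * p w)"

definition fmul :: "fa \<Rightarrow> fa \<Rightarrow> fa" where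
  "fmul p q = (\<lambda>w. \<Sum>k\<in>{0..length w}. p (take k w) * q (drop k w))"

definition sgn_pp :: "int \<Rightarrow> int \<Rightarrow> int \<Rightarrow> int \<Rightarrow> complex" where
  "sgn_pp i j k l = (-1) ^ ((par i + par j) * (par k + par l))"

definition br :: "int \<Rightarrow> int \<Rightarrow> int \<Rightarrow> int \<Rightarrow> fa" where
  "br i j k l =
     (if k = j then F i l else 0)
   - smul (sgn_pp i j k l) (if i = l then F k j else 0)
   + (if k = - j then F (- i) l else 0)
   - smul (sgn_pp i j k l) (if - i = l then F k (- j) else 0)"

definition relator :: "int \<Rightarrow> int \<Rightarrow> int \<Rightarrow> int \<Rightarrow> fa" where
  "relator i j k l = fmul (F i j) (F k l) - smul (sgn_pp i j k l) (fmul (F k l) (F i j)) - br i j k l"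

inductive_set J :: "nat \<Rightarrow> fa set" for N :: nat where
  J_zero: "0 \<in> J N"
| J_add: "x \<in> J N \<Longrightarrow> y \<in> J N \<Longrightarrow> x + y \<in> J N"
| J_smul: "x \<in> J N \<Longrightarrow> smul c x \<in> J N"
| J_gen: "(i, j) \<in> basis N \<Longrightarrow> (k, l) \<in> basis N \<Longrightarrow>
           fmul (fmul (mono u) (relator i j k l)) (mono v) \<in> J N"

definition FA :: "nat \<Rightarrow> fa set" where
  "FA N = {a. finite {w. a w \<noteq> 0} \<and> (\<forall>w. a w \<noteq> 0 \<longrightarrow> set w \<subseteq> basis N)}"

definition wpar :: "gen list \<Rightarrow> nat" where
  "wpar w = (\<Sum>g\<leftarrow>w. par (fst g) + par (snd g))"

definition even_elem :: "fa \<Rightarrow> bool" where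
  "even_elem x = (\<forall>w. x w \<noteq> 0 \<longrightarrow> even (wpar w))"

fun C :: "nat \<Rightarrow> nat \<Rightarrow> int \<Rightarrow> int \<Rightarrow> fa" where
  "C N 0 i j = 0"
| "C N (Suc 0) i j = F i j"
| "C N (Suc (Suc n)) i j =
     (\<Sum>k\<in>idx N. fmul (C N (Suc n) i k) (smul ((-1) ^ par k) (F k j)))"

definition cc :: "nat \<Rightarrow> nat \<Rightarrow> fa" where
  "cc N n = (\<Sum>i\<in>idx N. C N n i i)"

end

theory Submission
  imports Defs
begin


lemma fmul_assoc: "fmul (fmul p q) r = fmul p (fmul q r)"
proof (rule ext)
  fix w :: "gen list"
  define L where "L = length w"
  define g where "g = (\<lambda>m t. p (take m w) * q (take t (drop m w)) * r (drop (m+t) w))"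
  have "fmul (fmul p q) r w = (\<Sum>k\<le>L. \<Sum>m\<le>k. g m (k - m))"
    unfolding fmul_def g_def L_def atLeast0AtMost
    by (auto simp: sum_distrib_right min_def drop_take intro!: sum.cong)
  also have "\<dots> = (\<Sum>(m,t)\<in>{(m,t). m+t \<le> L}. g m t)"
    by (rule sum.triangle_reindex_eq[symmetric])
  also have "\<dots> = (\<Sum>m\<le>L. \<Sum>t\<le>L - m. g m t)"
  proof -
    have e: "{(m,t). m+t \<le> L} = Sigma {..L} (\<lambda>m. {..L-m})" by auto
    show ?thesis unfolding e by (subst sum.Sigma) auto
  qed
  also have "\<dots> = fmul p (fmul q r) w"
    unfolding fmul_def g_def L_def atLeast0AtMost
    by (auto simp: sum_distrib_left mult.assoc add.commute intro!: sum.cong)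
  finally show "fmul (fmul p q) r w = fmul p (fmul q r) w" .
qed

lemma sum_app: "(sum f S) w = (\<Sum>k\<in>S. f k w)" for f :: "'b \<Rightarrow> fa"
  by (induction S rule: infinite_finite_induct) auto
lemma fmul_add_left: "fmul (x + y) z = fmul x z + fmul y z"
  by (auto simp: fmul_def fun_eq_iff distrib_right sum.distrib)
lemma fmul_add_right: "fmul z (x + y) = fmul z x + fmul z y"
  by (auto simp: fmul_def fun_eq_iff distrib_left sum.distrib)
lemma fmul_diff_left: "fmul (x - y) z = fmul x z - fmul y z"
  by (auto simp: fmul_def fun_eq_iff left_diff_distrib sum_subtractf)
lemma fmul_diff_right: "fmul z (x - y) = fmul z x - fmul z y"
  by (auto simp: fmul_def fun_eq_iff right_diff_distrib sum_subtractf)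
lemma fmul_zero_left[simp]: "fmul 0 z = 0"
  by (auto simp: fmul_def fun_eq_iff)
lemma fmul_zero_right[simp]: "fmul z 0 = 0"
  by (auto simp: fmul_def fun_eq_iff)
lemma fmul_zero_left'[simp]: "fmul (\<lambda>a. 0) z = (\<lambda>a. 0)"
  by (auto simp: fmul_def fun_eq_iff)
lemma fmul_zero_right'[simp]: "fmul z (\<lambda>a. 0) = (\<lambda>a. 0)"
  by (auto simp: fmul_def fun_eq_iff)
lemma J_zero': "(\<lambda>a. 0) \<in> J N"
  using J_zero[of N] by (simp add: zero_fun_def)
lemma fmul_smul_left: "fmul (smul c x) z = smul c (fmul x z)"
  by (auto simp: fmul_def smul_def fun_eq_iff sum_distrib_left mult.assoc)
lemma fmul_smul_right: "fmul z (smul c x) = smul c (fmul z x)"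
  by (auto simp: fmul_def smul_def fun_eq_iff sum_distrib_left mult.left_commute)
lemma fmul_sum_left: "fmul (\<Sum>k\<in>S. f k) z = (\<Sum>k\<in>S. fmul (f k) z)"
  by (simp add: fun_eq_iff fmul_def sum_app sum_distrib_right sum.swap[of _ S])

lemma fmul_sum_right: "fmul z (\<Sum>k\<in>S. f k) = (\<Sum>k\<in>S. fmul z (f k))"
  by (simp add: fun_eq_iff fmul_def sum_app sum_distrib_left sum.swap[of _ S])

lemma fmul_if_left: "fmul (if P then x else y) z = (if P then fmul x z else fmul y z)"
  by simp
lemma fmul_if_right: "fmul z (if P then x else y) = (if P then fmul z x else fmul z y)"
  by simp

lemma smul_add: "smul c (x + y) = smul c x + smul c y"
  by (auto simp: smul_def fun_eq_iff distrib_left)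
lemma smul_diff: "smul c (x - y) = smul c x - smul c y"
  by (auto simp: smul_def fun_eq_iff right_diff_distrib)
lemma smul_smul: "smul c (smul d x) = smul (c * d) x"
  by (auto simp: smul_def fun_eq_iff)
lemma smul_zero[simp]: "smul c 0 = 0"
  by (auto simp: smul_def fun_eq_iff)
lemma smul_one[simp]: "smul 1 x = x"
  by (auto simp: smul_def fun_eq_iff)
lemma smul_sum: "smul c (\<Sum>k\<in>S. f k) = (\<Sum>k\<in>S. smul c (f k))"
  by (simp add: fun_eq_iff smul_def sum_app sum_distrib_left)

lemma smul_if: "smul c (if P then x else y) = (if P then smul c x else smul c y)"
  by simp
lemma smul_apply: "smul c x w = c * x w" by (simp add: smul_def)


lemma split_iff: "k \<le> length w \<Longrightarrow> (take k w = u \<and> drop k w = v) \<longleftrightarrow> (k = length u \<and> w = u @ v)"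
  by (metis append_eq_conv_conj append_take_drop_id length_take min.absorb2)
lemma mono_mul: "fmul (mono u) (mono v) = mono (u @ v)"
proof (rule ext)
  fix w
  have "fmul (mono u) (mono v) w = (\<Sum>k\<in>{0..length w}. if k = length u then (if w = u @ v then 1 else 0) else 0)"
    unfolding fmul_def mono_def
  proof (rule sum.cong)
    fix k assume "k \<in> {0..length w}"
    then have "k \<le> length w" by simp
    note si = split_iff[OF this, of u v]
    show "(if take k w = u then 1 else 0) * (if drop k w = v then 1 else 0) =
          (if k = length u then if w = u @ v then 1 else 0 else (0::complex))"
    proof (cases "take k w = u \<and> drop k w = v")
      case True then show ?thesis using si by simp
    next
      case False
      then have "\<not> (k = length u \<and> w = u @ v)" using si by blast
      then have r: "(if k = length u then if w = u @ v then 1 else 0 else (0::complex)) = 0" by auto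
      from False have l: "(if take k w = u then 1 else 0) * (if drop k w = v then 1 else 0) = (0::complex)" by auto
      show ?thesis unfolding r l ..
    qed
  qed simp
  also have "\<dots> = mono (u @ v) w"
    by (auto simp: mono_def)
  finally show "fmul (mono u) (mono v) w = mono (u @ v) w" .
qed

lemma fmul_unit_left[simp]: "fmul (mono []) x = x"
proof (rule ext)
  fix w
  have "fmul (mono []) x w = (\<Sum>k\<in>{0..length w}. if k = 0 then x w else 0)"
    unfolding fmul_def mono_def by (rule sum.cong) auto
  then show "fmul (mono []) x w = x w" by simp
qed
lemma fmul_unit_right[simp]: "fmul x (mono []) = x"
proof (rule ext)
  fix w
  have "fmul x (mono []) w = (\<Sum>k\<in>{0..length w}. if k = length w then x w else 0)"
    unfolding fmul_def mono_def by (rule sum.cong) auto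
  then show "fmul x (mono []) w = x w" by simp
qed

definition fin :: "fa \<Rightarrow> bool" where "fin x = finite {w. x w \<noteq> 0}"

lemma fin_expand: assumes "fin p" shows "p = (\<Sum>w\<in>{w. p w \<noteq> 0}. smul (p w) (mono w))"
proof (rule ext)
  fix v
  have "(\<Sum>w\<in>{w. p w \<noteq> 0}. smul (p w) (mono w)) v = (\<Sum>w\<in>{w. p w \<noteq> 0}. if w = v then p w else 0)"
    unfolding sum_app smul_def mono_def by (rule sum.cong) auto
  also have "\<dots> = p v" using assms unfolding fin_def by (simp add: sum.delta')
  finally show "p v = (\<Sum>w\<in>{w. p w \<noteq> 0}. smul (p w) (mono w)) v" by simp
qed

lemma J_sum: "(\<And>k. k \<in> S \<Longrightarrow> f k \<in> J N) \<Longrightarrow> (\<Sum>k\<in>S. f k) \<in> J N"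
  by (induction S rule: infinite_finite_induct) (auto intro: J.intros)
lemma J_neg: "x \<in> J N \<Longrightarrow> - x \<in> J N"
proof -
  assume "x \<in> J N"
  then have "smul (-1) x \<in> J N" by (rule J_smul)
  moreover have "smul (-1) x = - x" by (auto simp: smul_def fun_eq_iff)
  ultimately show ?thesis by simp
qed
lemma J_diff: "x \<in> J N \<Longrightarrow> y \<in> J N \<Longrightarrow> x - y \<in> J N"
  using J_add[of x N "- y"] J_neg[of y N] by simp

lemma J_mul_left: assumes "x \<in> J N" "fin p" shows "fmul p x \<in> J N"
  using assms(1)
proof induction
  case J_zero then show ?case by (simp add: J.intros J_zero')
next
  case (J_add x y) then have "fmul p (x + y) \<in> J N" by (simp only: fmul_add_right J.J_add)
  then show ?case by (simp add: plus_fun_def)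
next
  case (J_smul x c) then show ?case by (simp add: fmul_smul_right J.intros)
next
  case (J_gen i j k l u v)
  have "fmul p (fmul (fmul (mono u) (relator i j k l)) (mono v))
     = (\<Sum>w\<in>{w. p w \<noteq> 0}. smul (p w) (fmul (fmul (mono (w @ u)) (relator i j k l)) (mono v)))"
    by (subst fin_expand[OF assms(2)]) (simp add: fmul_sum_left fmul_smul_left fmul_assoc mono_mul[symmetric])
  also have "\<dots> \<in> J N" by (intro J_sum J.intros J_gen)
  finally show ?case .
qed

lemma J_mul_right: assumes "x \<in> J N" "fin p" shows "fmul x p \<in> J N"
  using assms(1)
proof induction
  case J_zero then show ?case by (simp add: J.intros J_zero')
next
  case (J_add x y) then have "fmul (x + y) p \<in> J N" by (simp only: fmul_add_left J.J_add)
  then show ?case by (simp add: plus_fun_def)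
next
  case (J_smul x c) then show ?case by (simp add: fmul_smul_left J.intros)
next
  case (J_gen i j k l u v)
  have "fmul (fmul (fmul (mono u) (relator i j k l)) (mono v)) p
     = (\<Sum>w\<in>{w. p w \<noteq> 0}. smul (p w) (fmul (fmul (mono u) (relator i j k l)) (mono (v @ w))))"
    by (subst arg_cong[where f="fmul _", OF fin_expand[OF assms(2)]]) (simp add: fmul_sum_right fmul_smul_right fmul_assoc mono_mul)
  also have "\<dots> \<in> J N" by (intro J_sum J.intros J_gen)
  finally show ?case .
qed


definition th :: "int \<Rightarrow> complex" where "th k = (-1) ^ par k"

lemma par_neg: "k \<noteq> 0 \<Longrightarrow> par (- k) = 1 - par k"
  by (simp add: par_def)
lemma th_neg: "k \<noteq> 0 \<Longrightarrow> th (- k) = - th k"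
  by (auto simp: th_def par_def)
lemma th_sq: "th k * th k = 1"
  by (auto simp: th_def par_def)

lemma sgn_pp_alt: "sgn_pp a b i j = (if even ((par a + par b) * (par i + par j)) then 1 else -1)"
  by (simp add: sgn_pp_def)

lemma par01: "par k = 0 \<or> par k = 1" by (simp add: par_def)
lemma th_alt: "th k = (if par k = 0 then 1 else -1)" using par01[of k] by (auto simp: th_def)
lemma sp_mult: "sgn_pp a b i k * sgn_pp a b k j = sgn_pp a b i j"
  unfolding sgn_pp_alt using par01[of a] par01[of b] par01[of i] par01[of j] par01[of k]
  by (elim disjE) (simp_all)
lemma sp_same: "sgn_pp a b i i = 1"
  unfolding sgn_pp_alt using par01[of a] par01[of b] par01[of i]
  by (elim disjE) (simp_all)
lemma sp_S2: "sgn_pp a b i a * th a = sgn_pp a b i b * th b"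
  unfolding sgn_pp_alt th_alt using par01[of a] par01[of b] par01[of i]
  by (elim disjE) (simp_all)
lemma sp_S3: "a \<noteq> 0 \<Longrightarrow> b \<noteq> 0 \<Longrightarrow> sgn_pp a b i (- a) * th (- a) = sgn_pp a b i (- b) * th (- b)"
  unfolding sgn_pp_alt th_alt using par01[of a] par01[of b] par01[of i]
  by (elim disjE) (simp_all add: par_neg)
lemma sp_neg: "i \<noteq> 0 \<Longrightarrow> j \<noteq> 0 \<Longrightarrow> sgn_pp a b (- i) (- j) = sgn_pp a b i j"
  unfolding sgn_pp_alt using par01[of a] par01[of b] par01[of i] par01[of j]
  by (elim disjE) (simp_all add: par_neg)

lemma idx_neg: "k \<in> idx N \<Longrightarrow> - k \<in> idx N"
  by (auto simp: idx_def)
lemma idx_nz: "k \<in> idx N \<Longrightarrow> k \<noteq> 0"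
  by (auto simp: idx_def)
lemma idx_finite: "finite (idx N)"
proof -
  have "idx N \<subseteq> {- int N..int N}" by (auto simp: idx_def)
  then show ?thesis by (rule finite_subset) simp
qed
lemma sum_idx_neg: "sum f (idx N) = sum (\<lambda>k. f (- k)) (idx N)"
  by (rule sum.reindex_bij_witness[where i=uminus and j=uminus]) (auto simp: idx_neg)

lemma F_neg: "i \<noteq> 0 \<Longrightarrow> F (- i) (- j) = F i j"
  by (auto simp: F_def canon_def)
lemma F_neg': "i \<noteq> 0 \<Longrightarrow> F i (- j) = F (- i) j"
  using F_neg[of i "-j"] by simp
lemma F_basis: "(a, b) \<in> basis N \<Longrightarrow> F a b = mono [(a, b)]"
  by (auto simp: F_def canon_def basis_def)

lemma sum_if_const: "(\<Sum>k\<in>S. if P then f k else 0) = (if P then (\<Sum>k\<in>S. f k) else 0)"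
  by auto

lemma fin_mono: "fin (mono u)"
proof -
  have "{w. mono u w \<noteq> 0} = {u}" by (auto simp: mono_def)
  then show ?thesis by (simp add: fin_def)
qed
lemma fin_F: "fin (F i j)" by (simp add: F_def fin_mono)
lemma fin_smul: "fin x \<Longrightarrow> fin (smul c x)"
  unfolding fin_def smul_def by (rule finite_subset[rotated]) auto
lemma fin_add: "fin x \<Longrightarrow> fin y \<Longrightarrow> fin (x + y)"
  unfolding fin_def by (rule finite_subset[of _ "{w. x w \<noteq> 0} \<union> {w. y w \<noteq> 0}"]) auto
lemma fin_add': "fin x \<Longrightarrow> fin y \<Longrightarrow> fin (\<lambda>a. x a + y a)"
  using fin_add[of x y] by (simp add: plus_fun_def)
lemma fin_zero: "fin 0" by (simp add: fin_def)
lemma fin_zero': "fin (\<lambda>a. 0)" by (simp add: fin_def)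
lemma fin_sum: "(\<And>k. k \<in> S \<Longrightarrow> fin (f k)) \<Longrightarrow> fin (\<Sum>k\<in>S. f k)"
proof (induction S rule: infinite_finite_induct)
  case (insert x F) then show ?case by (simp add: fin_add fin_add')
qed (simp_all add: fin_zero)
lemma fin_fmul: assumes "fin p" "fin q" shows "fin (fmul p q)"
proof -
  have "{w. fmul p q w \<noteq> 0} \<subseteq> (\<lambda>(u, v). u @ v) ` ({w. p w \<noteq> 0} \<times> {w. q w \<noteq> 0})"
  proof
    fix w assume "w \<in> {w. fmul p q w \<noteq> 0}"
    then have "(\<Sum>k\<in>{0..length w}. p (take k w) * q (drop k w)) \<noteq> 0" by (simp add: fmul_def)
    then obtain k where "p (take k w) * q (drop k w) \<noteq> 0" by (meson sum.neutral)
    then show "w \<in> (\<lambda>(u, v). u @ v) ` ({w. p w \<noteq> 0} \<times> {w. q w \<noteq> 0})"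
      by (intro image_eqI[of _ _ "(take k w, drop k w)"]) auto
  qed
  moreover have "finite ((\<lambda>(u, v). u @ v) ` ({w. p w \<noteq> 0} \<times> {w. q w \<noteq> 0}))"
    using assms unfolding fin_def by simp
  ultimately show ?thesis unfolding fin_def by (rule finite_subset)
qed
lemma fin_C: "fin (C N n i j)"
proof (induction N n i j rule: C.induct)
  case (3 N n i j) show ?case unfolding C.simps by (intro fin_sum fin_fmul fin_smul fin_F 3)
qed (simp_all add: fin_zero fin_zero' fin_F)



lemma C_SS: "C N (Suc (Suc n)) i j = (\<Sum>k\<in>idx N. smul (th k) (fmul (C N (Suc n) i k) (F k j)))"
  by (simp add: fmul_smul_right th_def)

lemma C_neg: "i \<in> idx N \<Longrightarrow> j \<in> idx N \<Longrightarrow> C N (Suc n) (- i) (- j) = smul ((-1) ^ n) (C N (Suc n) i j)"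
proof (induction n arbitrary: j)
  case 0 then show ?case by (simp add: F_neg idx_nz)
next
  case (Suc n)
  have "C N (Suc (Suc n)) (- i) (- j) = (\<Sum>k\<in>idx N. smul (th (- k)) (fmul (C N (Suc n) (- i) (- k)) (F (- k) (- j))))"
    unfolding C_SS by (rule sum_idx_neg)
  also have "\<dots> = (\<Sum>k\<in>idx N. smul ((-1) ^ Suc n) (smul (th k) (fmul (C N (Suc n) i k) (F k j))))"
    by (rule sum.cong) (auto simp: Suc idx_nz th_neg F_neg fmul_smul_left smul_smul mult.commute)
  also have "\<dots> = smul ((-1) ^ Suc n) (C N (Suc (Suc n)) i j)"
    by (simp only: C_SS smul_sum)
  finally show ?case .
qed

lemma br_neg: "a \<noteq> 0 \<Longrightarrow> i \<noteq> 0 \<Longrightarrow> j \<noteq> 0 \<Longrightarrow> br a b (- i) (- j) = br a b i j"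
  unfolding br_def sp_neg
  by (auto simp: fun_eq_iff F_neg' smul_def)

lemma rel_J: assumes "(a, b) \<in> basis N" "i \<in> idx N" "j \<in> idx N"
  shows "fmul (F a b) (F i j) - smul (sgn_pp a b i j) (fmul (F i j) (F a b)) - br a b i j \<in> J N"
proof (cases "0 < i")
  case True
  then have "(i, j) \<in> basis N" using assms by (auto simp: basis_def idx_def)
  from J_gen[OF assms(1) this, of "[]" "[]"] show ?thesis by (simp add: relator_def)
next
  case False
  then have ij: "(- i, - j) \<in> basis N" using assms by (auto simp: basis_def idx_def)
  have a0: "a \<noteq> 0" using assms by (auto simp: basis_def)
  have "F i j = F (- i) (- j)" using assms by (simp add: F_neg idx_nz)
  moreover have "sgn_pp a b i j = sgn_pp a b (- i) (- j)" using assms by (simp add: sp_neg idx_nz)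
  moreover have "br a b i j = br a b (- i) (- j)" using assms a0 by (simp add: br_neg idx_nz)
  ultimately show ?thesis
    using J_gen[OF assms(1) ij, of "[]" "[]"] by (simp add: relator_def)
qed



definition X :: "nat \<Rightarrow> nat \<Rightarrow> int \<Rightarrow> int \<Rightarrow> int \<Rightarrow> int \<Rightarrow> fa" where
  "X N n a b i j = (if i = b then C N n a j else 0)
     - (if a = j then smul (sgn_pp a b i j) (C N n i b) else 0)
     + (if i = - b then C N n (- a) j else 0)
     - (if - a = j then smul (sgn_pp a b i j) (C N n i (- b)) else 0)"

lemma X_one: "X N (Suc 0) a b i j = br a b i j"
  by (simp add: X_def br_def smul_if)

lemma C_SS': "C N (Suc (Suc n)) i j = (\<Sum>k\<in>idx N. fmul (C N (Suc n) i k) (smul (th k) (F k j)))"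
  by (simp add: th_def)

lemma alg:
  assumes "s1 * s2 = s"
  shows "fmul A (fmul Cm (smul t Fk)) - smul s (fmul (fmul Cm (smul t Fk)) A)
          - (fmul Xm (smul t Fk) + smul (s1 * t) (fmul Cm B))
       = fmul ((fmul A Cm - smul s1 (fmul Cm A)) - Xm) (smul t Fk)
          + smul (s1 * t) (fmul Cm (fmul A Fk - smul s2 (fmul Fk A) - B))"
  unfolding assms[symmetric]
  apply (simp only: fmul_diff_left fmul_diff_right fmul_smul_left fmul_smul_right fmul_assoc
      fmul_add_left fmul_add_right smul_diff smul_smul smul_add)
  apply (simp add: fun_eq_iff smul_apply algebra_simps)
  done


lemma sum_delta_const: "a \<in> S \<Longrightarrow> finite S \<Longrightarrow> (\<Sum>k\<in>S. if a = k then (Y::fa) else 0) = Y"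
  by (simp add: sum.delta)

lemma sumA:
  assumes "a \<in> idx N" "- a \<in> idx N"
  shows "(\<Sum>k\<in>idx N. fmul (X N (Suc n) a b i k) (smul (th k) (F k j))) =
     (if i = b then C N (Suc (Suc n)) a j else 0)
     - smul (sgn_pp a b i a * th a) (fmul (C N (Suc n) i b) (F a j))
     + (if i = - b then C N (Suc (Suc n)) (- a) j else 0)
     - smul (sgn_pp a b i (- a) * th (- a)) (fmul (C N (Suc n) i (- b)) (F (- a) j))"
proof -
  let ?G = "\<lambda>k. smul (th k) (F k j)"
  have e: "fmul (X N (Suc n) a b i k) (?G k) =
       (if i = b then fmul (C N (Suc n) a k) (?G k) else 0)
     - (if a = k then smul (sgn_pp a b i a * th a) (fmul (C N (Suc n) i b) (F a j)) else 0)
     + (if i = - b then fmul (C N (Suc n) (- a) k) (?G k) else 0)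
     - (if - a = k then smul (sgn_pp a b i (- a) * th (- a)) (fmul (C N (Suc n) i (- b)) (F (- a) j)) else 0)" for k
    unfolding X_def fmul_diff_left fmul_add_left
    by (auto simp: fmul_smul_left fmul_smul_right smul_smul mult.commute)
  have f: "finite (idx N)" by (rule idx_finite)
  show ?thesis
    unfolding e sum_subtractf sum.distrib sum_if_const C_SS'
    using sum_delta_const[OF assms(1) f] sum_delta_const[OF assms(2) f] by simp
qed


lemma sum_delta_const': "a \<in> S \<Longrightarrow> finite S \<Longrightarrow> (\<Sum>k\<in>S. if k = a then (Y::fa) else 0) = Y"
  by (simp add: sum.delta')

lemma sp_mult': "sgn_pp a b i k * th k * sgn_pp a b k j = sgn_pp a b i j * th k"
  using sp_mult[of a b i k j] by (simp add: algebra_simps)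

lemma sumB:
  assumes "b \<in> idx N" "- b \<in> idx N"
  shows "(\<Sum>k\<in>idx N. smul (sgn_pp a b i k * th k) (fmul (C N (Suc n) i k) (br a b k j))) =
     smul (sgn_pp a b i b * th b) (fmul (C N (Suc n) i b) (F a j))
     - (if a = j then smul (sgn_pp a b i j) (C N (Suc (Suc n)) i b) else 0)
     + smul (sgn_pp a b i (- b) * th (- b)) (fmul (C N (Suc n) i (- b)) (F (- a) j))
     - (if - a = j then smul (sgn_pp a b i j) (C N (Suc (Suc n)) i (- b)) else 0)"
proof -
  have e: "smul (sgn_pp a b i k * th k) (fmul (C N (Suc n) i k) (br a b k j)) =
       (if k = b then smul (sgn_pp a b i b * th b) (fmul (C N (Suc n) i b) (F a j)) else 0)
     - (if a = j then smul (sgn_pp a b i j) (smul (th k) (fmul (C N (Suc n) i k) (F k b))) else 0)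
     + (if k = - b then smul (sgn_pp a b i (- b) * th (- b)) (fmul (C N (Suc n) i (- b)) (F (- a) j)) else 0)
     - (if - a = j then smul (sgn_pp a b i j) (smul (th k) (fmul (C N (Suc n) i k) (F k (- b)))) else 0)" for k
    unfolding br_def fmul_diff_right fmul_add_right smul_diff smul_add
    by (auto simp: fmul_smul_left fmul_smul_right smul_smul sp_mult' smul_if)
  have f: "finite (idx N)" by (rule idx_finite)
  show ?thesis
    unfolding e sum_subtractf sum.distrib sum_if_const C_SS smul_sum
    using sum_delta_const'[OF assms(1) f] sum_delta_const'[OF assms(2) f] by simp
qed


lemma sumAB:
  assumes "a \<in> idx N" "b \<in> idx N"
  shows "(\<Sum>k\<in>idx N. fmul (X N (Suc n) a b i k) (smul (th k) (F k j))
            + smul (sgn_pp a b i k * th k) (fmul (C N (Suc n) i k) (br a b k j)))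
         = X N (Suc (Suc n)) a b i j"
proof -
  have a: "- a \<in> idx N" "a \<noteq> 0" using assms by (auto simp: idx_neg idx_nz)
  have b: "- b \<in> idx N" "b \<noteq> 0" using assms by (auto simp: idx_neg idx_nz)
  show ?thesis
    unfolding sum.distrib sumA[OF assms(1) a(1)] sumB[OF assms(2) b(1)]
    unfolding X_def[of N "Suc (Suc n)"]
    using sp_S2[of a b i] sp_S3[OF a(2) b(2), of i]
    by (simp add: algebra_simps)
qed

lemma comm:
  assumes ab: "(a, b) \<in> basis N"
  shows "i \<in> idx N \<Longrightarrow> j \<in> idx N \<Longrightarrow>
    fmul (F a b) (C N (Suc n) i j) - smul (sgn_pp a b i j) (fmul (C N (Suc n) i j) (F a b))
      - X N (Suc n) a b i j \<in> J N"
proof (induction n arbitrary: i j)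
  case 0
  show ?case unfolding X_one C.simps(2) by (rule rel_J[OF ab 0(1) 0(2)])
next
  case (Suc n)
  have aidx: "a \<in> idx N" "b \<in> idx N" using ab by (auto simp: basis_def idx_def)
  let ?F = "F a b"
  let ?G = "\<lambda>k. smul (th k) (F k j)"
  let ?C = "\<lambda>k. C N (Suc n) i k"
  let ?T = "\<lambda>k. fmul (X N (Suc n) a b i k) (?G k) + smul (sgn_pp a b i k * th k) (fmul (?C k) (br a b k j))"
  let ?D = "\<lambda>k. fmul ?F (?C k) - smul (sgn_pp a b i k) (fmul (?C k) ?F)"
  let ?R = "\<lambda>k. fmul ?F (F k j) - smul (sgn_pp a b k j) (fmul (F k j) ?F) - br a b k j"
  have "fmul ?F (C N (Suc (Suc n)) i j) - smul (sgn_pp a b i j) (fmul (C N (Suc (Suc n)) i j) ?F)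
          - X N (Suc (Suc n)) a b i j
      = (\<Sum>k\<in>idx N. fmul ?F (fmul (?C k) (?G k)) - smul (sgn_pp a b i j) (fmul (fmul (?C k) (?G k)) ?F) - ?T k)"
    unfolding C_SS' sumAB[OF aidx, symmetric] fmul_sum_right fmul_sum_left smul_sum sum_subtractf ..
  also have "\<dots> = (\<Sum>k\<in>idx N. fmul (?D k - X N (Suc n) a b i k) (?G k)
                   + smul (sgn_pp a b i k * th k) (fmul (?C k) (?R k)))"
    by (rule sum.cong[OF refl], rule alg, rule sp_mult)
  also have "\<dots> \<in> J N"
  proof (rule J_sum)
    fix k assume k: "k \<in> idx N"
    show "fmul (?D k - X N (Suc n) a b i k) (?G k) + smul (sgn_pp a b i k * th k) (fmul (?C k) (?R k)) \<in> J N"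
      by (intro J_add J_smul J_mul_right J_mul_left Suc.IH Suc.prems k rel_J[OF ab] fin_smul fin_F fin_C)
  qed
  finally show ?case .
qed



definition hom :: "nat \<Rightarrow> fa \<Rightarrow> bool" where
  "hom p x = (\<forall>w. x w \<noteq> 0 \<longrightarrow> even (wpar w + p))"

lemma wpar_append: "wpar (u @ v) = wpar u + wpar v"
  by (simp add: wpar_def)

lemma hom_cong: "hom p x \<Longrightarrow> even (p + q) \<Longrightarrow> hom q x"
  unfolding hom_def by (metis add.left_commute even_add)

lemma hom_sum: "(\<And>k. k \<in> S \<Longrightarrow> hom p (f k)) \<Longrightarrow> hom p (\<Sum>k\<in>S. f k)"
  unfolding hom_def sum_app by (meson sum.neutral)

lemma hom_smul: "hom p x \<Longrightarrow> hom p (smul c x)"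
  unfolding hom_def smul_def by simp

lemma hom_fmul: assumes "hom p x" "hom q y" shows "hom (p + q) (fmul x y)"
  unfolding hom_def
proof (intro allI impI)
  fix w assume "fmul x y w \<noteq> 0"
  then have "(\<Sum>k\<in>{0..length w}. x (take k w) * y (drop k w)) \<noteq> 0" by (simp add: fmul_def)
  then obtain k where "x (take k w) * y (drop k w) \<noteq> 0" by (meson sum.neutral)
  then have "even (wpar (take k w) + p)" "even (wpar (drop k w) + q)"
    using assms unfolding hom_def by auto
  moreover have "wpar w = wpar (take k w) + wpar (drop k w)"
    by (metis append_take_drop_id wpar_append)
  ultimately show "even (wpar w + (p + q))" by simp
qed

lemma hom_F: assumes "i \<in> idx N" "j \<in> idx N" shows "hom (par i + par j) (F i j)"
proof -
  have i: "i \<noteq> 0" and j: "j \<noteq> 0" using assms by (auto simp: idx_nz)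
  have "even (par (fst (canon i j)) + par (snd (canon i j)) + (par i + par j))"
    using i j by (auto simp: canon_def par_def)
  then show ?thesis unfolding hom_def F_def mono_def by (simp add: wpar_def)
qed

lemma hom_C: "i \<in> idx N \<Longrightarrow> j \<in> idx N \<Longrightarrow> hom (par i + par j) (C N (Suc n) i j)"
proof (induction n arbitrary: j)
  case 0 then show ?case by (simp add: hom_F)
next
  case (Suc n)
  show ?case unfolding C_SS
  proof (rule hom_sum)
    fix k assume k: "k \<in> idx N"
    have "hom ((par i + par k) + (par k + par j)) (fmul (C N (Suc n) i k) (F k j))"
      by (rule hom_fmul[OF Suc.IH[OF Suc.prems(1) k] hom_F[OF k Suc.prems(2)]])
    then show "hom (par i + par j) (smul (th k) (fmul (C N (Suc n) i k) (F k j)))"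
      by (intro hom_smul) (erule hom_cong, presburger)
  qed
qed

lemma cc_even: "even_elem (cc N (Suc n))"
proof -
  have "hom 0 (cc N (Suc n))" unfolding cc_def
    by (rule hom_sum, rule hom_cong[OF hom_C], auto)
  then show ?thesis by (simp add: hom_def even_elem_def)
qed

lemma cc_zero: "odd m \<Longrightarrow> cc N (Suc m) = 0"
proof -
  assume m: "odd m"
  have "cc N (Suc m) = (\<Sum>i\<in>idx N. C N (Suc m) (- i) (- i))"
    unfolding cc_def by (rule sum_idx_neg)
  also have "\<dots> = (\<Sum>i\<in>idx N. smul (-1) (C N (Suc m) i i))"
    by (rule sum.cong) (auto simp: C_neg m)
  also have "\<dots> = smul (-1) (cc N (Suc m))" by (simp add: cc_def smul_sum)
  finally have "\<And>w. cc N (Suc m) w = - cc N (Suc m) w"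
    by (metis smul_apply mult_minus1)
  then show ?thesis by (auto simp: fun_eq_iff)
qed

lemma sumX_diag: assumes "(a, b) \<in> basis N" shows "(\<Sum>i\<in>idx N. X N n a b i i) = 0"
proof -
  have ab: "a \<in> idx N" "b \<in> idx N" "- a \<in> idx N" "- b \<in> idx N"
    using assms by (auto simp: basis_def idx_def)
  have f: "finite (idx N)" by (rule idx_finite)
  show ?thesis
    unfolding X_def sum_subtractf sum.distrib sp_same
    using ab f by (simp add: sum.delta sum.delta')
qed

lemma comm_F: assumes "(a, b) \<in> basis N"
  shows "fmul (F a b) (cc N (Suc n)) - fmul (cc N (Suc n)) (F a b) \<in> J N"
proof -
  have "fmul (F a b) (cc N (Suc n)) - fmul (cc N (Suc n)) (F a b)
      = (\<Sum>i\<in>idx N. fmul (F a b) (C N (Suc n) i i) - smul (sgn_pp a b i i) (fmul (C N (Suc n) i i) (F a b))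
           - X N (Suc n) a b i i) + (\<Sum>i\<in>idx N. X N (Suc n) a b i i)"
    unfolding cc_def fmul_sum_left fmul_sum_right sp_same smul_one sum_subtractf by simp
  also have "\<dots> \<in> J N"
    unfolding sumX_diag[OF assms] using comm[OF assms]
    by (simp add: J_sum)
  finally show ?thesis .
qed

lemma prod_comm_id: "fmul c (fmul g w) - fmul (fmul g w) c
     = fmul (fmul c g - fmul g c) w + fmul g (fmul c w - fmul w c)"
  by (simp only: fmul_diff_left fmul_diff_right fmul_assoc) (simp add: fun_eq_iff)

lemma comm_mono: "set w \<subseteq> basis N \<Longrightarrow> fmul (cc N (Suc n)) (mono w) - fmul (mono w) (cc N (Suc n)) \<in> J N"
proof (induction w)
  case Nil then show ?case by (simp add: J_zero')
next
  case (Cons g w)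
  obtain a b where g: "g = (a, b)" by fastforce
  have ab: "(a, b) \<in> basis N" using Cons.prems g by auto
  have m: "mono (g # w) = fmul (F a b) (mono w)"
    by (simp add: F_basis[OF ab] mono_mul g)
  have "fmul (cc N (Suc n)) (F a b) - fmul (F a b) (cc N (Suc n)) \<in> J N"
    using J_neg[OF comm_F[OF ab]] by simp
  then have 1: "fmul (fmul (cc N (Suc n)) (F a b) - fmul (F a b) (cc N (Suc n))) (mono w) \<in> J N"
    by (rule J_mul_right[OF _ fin_mono])
  have "fmul (cc N (Suc n)) (mono w) - fmul (mono w) (cc N (Suc n)) \<in> J N"
    using Cons by (auto simp: fun_diff_def)
  then have 2: "fmul (F a b) (fmul (cc N (Suc n)) (mono w) - fmul (mono w) (cc N (Suc n))) \<in> J N"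
    by (rule J_mul_left[OF _ fin_F])
  show ?case unfolding m prod_comm_id by (rule J_add[OF 1 2])
qed

lemma comm_FA: assumes "x \<in> FA N"
  shows "fmul (cc N (Suc n)) x - fmul x (cc N (Suc n)) \<in> J N"
proof -
  have fx: "fin x" using assms by (simp add: FA_def fin_def)
  have "fmul (cc N (Suc n)) x - fmul x (cc N (Suc n))
      = (\<Sum>w\<in>{w. x w \<noteq> 0}. smul (x w) (fmul (cc N (Suc n)) (mono w) - fmul (mono w) (cc N (Suc n))))"
    by (subst (1 2) fin_expand[OF fx])
       (simp add: fmul_sum_left fmul_sum_right fmul_smul_left fmul_smul_right smul_diff sum_subtractf)
  also have "\<dots> \<in> J N"
    using assms by (intro J_sum J_smul comm_mono) (auto simp: FA_def)
  finally show ?thesis .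
qed


theorem mainTheorem2:
  fixes N n :: nat
  assumes "1 \<le> N" and "1 \<le> n"
  shows "(\<forall>i\<in>idx N. \<forall>j\<in>idx N.
            C N n (- i) (- j) - smul ((-1) ^ (n - 1)) (C N n i j) \<in> J N)
       \<and> (\<exists>x. even_elem x \<and> cc N n - x \<in> J N)
       \<and> (\<forall>a\<in>FA N. fmul (cc N n) a - fmul a (cc N n) \<in> J N)
       \<and> (even n \<longrightarrow> cc N n \<in> J N)"
proof -
  obtain m where n: "n = Suc m" using assms(2) by (cases n) auto
  have p1: "\<forall>i\<in>idx N. \<forall>j\<in>idx N. C N n (- i) (- j) - smul ((-1) ^ (n - 1)) (C N n i j) \<in> J N"
    unfolding n using J_zero by (simp add: C_neg)
  have p2: "\<exists>x. even_elem x \<and> cc N n - x \<in> J N"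
    using J_zero unfolding n by (intro exI[of _ "cc N (Suc m)"]) (simp add: cc_even)
  have p3: "\<forall>a\<in>FA N. fmul (cc N n) a - fmul a (cc N n) \<in> J N"
    unfolding n using comm_FA by blast
  have p4: "even n \<longrightarrow> cc N n \<in> J N"
    unfolding n using J_zero cc_zero by auto
  show ?thesis using p1 p2 p3 p4 by blast
qed


end
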